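(* For every $q\in X^*\setminus\{e\}$, the set of $\omega$-words $\xi\in X^\omega$ that are quasiperiodic with quasiperiod $q$ equals $P_q^\omega$.
   Context: $X$ is a finite alphabet with $|X|\ge 2$; $X^*$ the finite words (empty word $e$), $X^\omega$ the infinite words. $w\sqsubseteq\eta$ means $w$ is a prefix of $\eta$, $w\sqsubset\eta$ a proper prefix. For a language $L$, $L^\omega:=\{w_1w_2\cdots : w_i\in L\setminus\{e\}\}$. An $\omega$-word $\xi$ is quasiperiodic with quasiperiod $q$ if for every $j\in\mathbb{N}$ there is a prefix $u_j\sqsubseteq\xi$ with $j-|q|<|u_j|\le j$ and $u_j\cdot q\sqsubseteq\xi$. $P_q:=\{v: e\sqsubset v\sqsubseteq q\sqsubset v\cdot q\}$. *)

theory Defs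
  imports Main "HOL-Library.Sublist"
begin

definition omega_words :: "'a set \<Rightarrow> (nat \<Rightarrow> 'a) set" where
  "omega_words X = {\<xi>. \<forall>i. \<xi> i \<in> X}"

definition oprefix :: "'a list \<Rightarrow> (nat \<Rightarrow> 'a) \<Rightarrow> bool" where
  "oprefix w \<xi> \<longleftrightarrow> (\<forall>i < length w. w ! i = \<xi> i)"

text \<open>L^omega: infinite products w_1 w_2 ... of nonempty words of L.
  The infinite concatenation is characterised by all finite partial products being prefixes.\<close>
definition omega_power :: "'a list set \<Rightarrow> (nat \<Rightarrow> 'a) set" where
  "omega_power L = {\<xi>. \<exists>w :: nat \<Rightarrow> 'a list.
      (\<forall>i. w i \<in> L - {[]}) \<and> (\<forall>n. oprefix (concat (map w [0..<n])) \<xi>)}"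

definition quasiperiodic :: "(nat \<Rightarrow> 'a) \<Rightarrow> 'a list \<Rightarrow> bool" where
  "quasiperiodic \<xi> q \<longleftrightarrow> (\<forall>j::nat. \<exists>u. oprefix u \<xi>
      \<and> int j - int (length q) < int (length u) \<and> length u \<le> j \<and> oprefix (u @ q) \<xi>)"

definition Pq :: "'a list \<Rightarrow> 'a list set" where
  "Pq q = {v. strict_prefix [] v \<and> prefix v q \<and> strict_prefix q (v @ q)}"

end

theory Submission
  imports Defs
begin

definition occ :: "(nat \<Rightarrow> 'a) \<Rightarrow> 'a list \<Rightarrow> nat \<Rightarrow> bool" where
  "occ \<xi> q k \<longleftrightarrow> (\<forall>i<length q. \<xi> (k+i) = q!i)"

lemma Pq_intro:
  assumes oa: "occ \<xi> q a" and ob: "occ \<xi> q b" and ab: "a < b" and bq: "b \<le> a + length q"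
  shows "map \<xi> [a..<b] \<in> Pq q - {[]}"
proof -
  let ?v = "map \<xi> [a..<b]"
  have len: "length ?v = b - a" by simp
  have vt: "?v = take (b-a) q"
    by (rule nth_equalityI) (use oa bq in \<open>auto simp: occ_def\<close>)
  have p1: "prefix ?v q" using vt by (metis take_is_prefix)
  have qt: "q = take (length q) (?v @ q)"
  proof (rule nth_equalityI)
    show "length q = length (take (length q) (?v @ q))" by simp
  next
    fix i assume i: "i < length q"
    show "q ! i = take (length q) (?v @ q) ! i"
    proof (cases "i < b - a")
      case True
      then show ?thesis using i oa by (simp add: nth_append occ_def)
    next
      case False
      have "take (length q) (?v @ q) ! i = q ! (i - (b-a))" using i False by (simp add: nth_append)
      also have "\<dots> = \<xi> (b + (i - (b-a)))" using ob i False unfolding occ_def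
        by (metis diff_le_self le_less_trans)
      also have "b + (i - (b-a)) = a + i" using False ab by simp
      also have "\<xi> (a+i) = q!i" using oa i by (simp add: occ_def)
      finally show ?thesis by simp
    qed
  qed
  have p2: "prefix q (?v @ q)" by (metis qt take_is_prefix)
  have ne: "?v \<noteq> []" using ab by simp
  have "strict_prefix q (?v @ q)" using p2 ne by (auto simp: strict_prefix_def)
  moreover have "strict_prefix [] ?v" using ne by (simp add: strict_prefix_def)
  ultimately show ?thesis using p1 ne by (simp add: Pq_def)
qed

lemma oprefix_map: "oprefix (map \<xi> [0..<n]) \<xi>"
  by (simp add: oprefix_def)

lemma sub:
  assumes qp: "quasiperiodic \<xi> q" and qne: "q \<noteq> []"
  shows "\<xi> \<in> omega_power (Pq q)"
proof -
  have qp': "\<forall>j. \<exists>k. k \<le> j \<and> j < k + length q \<and> occ \<xi> q k"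
  proof
    fix j
    obtain u where u: "oprefix u \<xi>" "int j - int (length q) < int (length u)" "length u \<le> j"
      "oprefix (u @ q) \<xi>" using qp unfolding quasiperiodic_def by blast
    have "occ \<xi> q (length u)"
      unfolding occ_def
    proof (intro allI impI)
      fix i assume "i < length q"
      then have "(u@q) ! (length u + i) = \<xi> (length u + i)" using u(4) unfolding oprefix_def
        by (metis length_append nat_add_left_cancel_less)
      then show "\<xi> (length u + i) = q ! i" by (simp add: nth_append)
    qed
    then show "\<exists>k. k \<le> j \<and> j < k + length q \<and> occ \<xi> q k" using u(2,3) by (intro exI[of _ "length u"]) auto
  qed
  have o0: "occ \<xi> q 0" using qp'[rule_format, of 0] by auto
  have nxe: "\<forall>k. \<exists>k'. k < k' \<and> k' \<le> k + length q \<and> occ \<xi> q k'"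
  proof
    fix k
    obtain k' where "k' \<le> k + length q" "k + length q < k' + length q" "occ \<xi> q k'"
      using qp'[rule_format, of "k + length q"] by blast
    then show "\<exists>k'. k < k' \<and> k' \<le> k + length q \<and> occ \<xi> q k'" by auto
  qed
  define nx where "nx k = (SOME k'. k < k' \<and> k' \<le> k + length q \<and> occ \<xi> q k')" for k
  have nx: "k < nx k \<and> nx k \<le> k + length q \<and> occ \<xi> q (nx k)" for k
    unfolding nx_def using nxe by (metis (mono_tags, lifting) someI_ex)
  define p where "p n = (nx ^^ n) 0" for n
  have pS: "p (Suc n) = nx (p n)" for n by (simp add: p_def)
  have po: "occ \<xi> q (p n)" for n by (cases n) (auto simp: p_def o0 nx)
  define w where "w n = map \<xi> [p n..<p (Suc n)]" for n
  have wP: "w n \<in> Pq q - {[]}" for n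
    unfolding w_def using Pq_intro[OF po po] nx pS by metis
  have cw: "concat (map w [0..<n]) = map \<xi> [0..<p n]" for n
  proof (induction n)
    case 0 then show ?case by (simp add: p_def)
  next
    case (Suc n)
    have le: "p n \<le> p (Suc n)" using nx[of "p n"] pS by simp
    have "[0..<p (Suc n)] = [0..<p n] @ [p n..<p (Suc n)]"
      using le by (metis le0 upt_add_eq_append le_add_diff_inverse)
    then show ?case using Suc by (simp add: w_def)
  qed
  show ?thesis unfolding omega_power_def using wP cw oprefix_map by (intro CollectI exI[of _ w]) auto
qed

lemma sup:
  assumes "\<xi> \<in> omega_power (Pq q)" and qX: "set q \<subseteq> X"
  shows "\<xi> \<in> omega_words X \<and> quasiperiodic \<xi> q"
proof -
  obtain w where wP: "\<forall>i. w i \<in> Pq q - {[]}" and pre: "\<forall>n. oprefix (concat (map w [0..<n])) \<xi>"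
    using assms unfolding omega_power_def by blast
  define c where "c n = concat (map w [0..<n])" for n
  define p where "p n = length (c n)" for n
  have pS: "p (Suc n) = p n + length (w n)" for n by (simp add: p_def c_def)
  have p0: "p 0 = 0" by (simp add: p_def c_def)
  have wne: "w n \<noteq> []" and wpre: "prefix (w n) q" and qpre: "prefix q (w n @ q)" for n
    using wP[rule_format, of n] by (auto simp: Pq_def strict_prefix_def)
  have wle: "length (w n) \<le> length q" for n using wpre prefix_length_le by blast
  have xw: "\<xi> (p n + i) = w n ! i" if "i < length (w n)" for n i
  proof -
    have "oprefix (c (Suc n)) \<xi>" using pre unfolding c_def by blast
    moreover have "c (Suc n) = c n @ w n" by (simp add: c_def)
    ultimately show ?thesis using that unfolding oprefix_def p_def
      by (metis length_append nat_add_left_cancel_less nth_append_length_plus)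
  qed
  have occ: "\<forall>n. i < length q \<longrightarrow> \<xi> (p n + i) = q ! i" for i
  proof (induction i rule: less_induct)
    case (less i)
    show ?case
    proof (intro allI impI)
      fix n assume i: "i < length q"
      show "\<xi> (p n + i) = q ! i"
      proof (cases "i < length (w n)")
        case True
        obtain zs where "q = w n @ zs" using wpre by (auto simp: prefix_def)
        then show ?thesis using True xw by (simp add: nth_append)
      next
        case False
        let ?d = "length (w n)"
        have d: "?d > 0" using wne by simp
        have "\<xi> (p n + i) = \<xi> (p (Suc n) + (i - ?d))" using False pS by simp
        also have "\<dots> = q ! (i - ?d)" using less.IH[of "i - ?d"] d False i by (metis diff_less_mono2 less_le_trans not_less diff_le_self less_imp_diff_less)
        also have "\<dots> = (w n @ q) ! i" using False by (simp add: nth_append)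
        also have "\<dots> = q ! i"
        proof -
          obtain zs where "w n @ q = q @ zs" using qpre by (auto simp: prefix_def)
          then show ?thesis using i by (simp add: nth_append)
        qed
        finally show ?thesis .
      qed
    qed
  qed
  have loc: "\<exists>n. p n \<le> j \<and> j < p (Suc n)" for j
  proof (induction j)
    case 0 then show ?case using p0 pS wne by (intro exI[of _ 0]) auto
  next
    case (Suc j)
    then obtain n where n: "p n \<le> j" "j < p (Suc n)" by blast
    show ?case
    proof (cases "Suc j < p (Suc n)")
      case True then show ?thesis using n by (intro exI[of _ n]) auto
    next
      case False
      then have "p (Suc n) = Suc j" using n by simp
      then show ?thesis using pS[of "Suc n"] wne[of "Suc n"] by (intro exI[of _ "Suc n"]) auto
    qed
  qed
  have ow: "\<xi> \<in> omega_words X"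
    unfolding omega_words_def
  proof (intro CollectI allI)
    fix j
    obtain n where n: "p n \<le> j" "j < p (Suc n)" using loc by blast
    have jl: "j - p n < length q" using n pS wle[of n] by (metis add_diff_inverse_nat diff_less_mono le_add_diff_inverse2 less_le_trans not_less le_trans nat_add_left_cancel_le)
    have "\<xi> j = q ! (j - p n)" using occ[rule_format, OF jl, of n] n by simp
    then show "\<xi> j \<in> X" using jl qX by auto
  qed
  have "quasiperiodic \<xi> q"
    unfolding quasiperiodic_def
  proof
    fix j
    obtain n where n: "p n \<le> j" "j < p (Suc n)" using loc by blast
    have b: "j < p n + length q" using n pS wle[of n] by (metis add_le_mono1 add.commute le_add_diff_inverse2 less_le_trans nat_add_left_cancel_le)
    have o1: "oprefix (c n) \<xi>" using pre by (simp add: c_def)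
    have o2: "oprefix (c n @ q) \<xi>"
      unfolding oprefix_def
    proof (intro allI impI)
      fix i assume i: "i < length (c n @ q)"
      show "(c n @ q) ! i = \<xi> i"
      proof (cases "i < length (c n)")
        case True then show ?thesis using o1 by (simp add: oprefix_def nth_append)
      next
        case False
        then have "i - p n < length q" using i by (simp add: p_def)
        then show ?thesis using occ[rule_format, of "i - p n" n] False by (simp add: nth_append p_def)
      qed
    qed
    show "\<exists>u. oprefix u \<xi> \<and> int j - int (length q) < int (length u) \<and> length u \<le> j \<and> oprefix (u @ q) \<xi>"
      using o1 o2 n b by (intro exI[of _ "c n"]) (auto simp: p_def)
  qed
  then show ?thesis using ow by simp
qed

theorem mainTheorem5:
  fixes X :: "'a set" and q :: "'a list"
  assumes "finite X" and "card X \<ge> 2"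
    and "q \<in> lists X" and "q \<noteq> []"
  shows "{\<xi> \<in> omega_words X. quasiperiodic \<xi> q} = omega_power (Pq q)"
proof -
  have qX: "set q \<subseteq> X" using assms(3) by auto
  show ?thesis using sub[OF _ assms(4)] sup[OF _ qX] by blast
qed

end
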